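(* Let $A$, $B$ and $C$ be distinct (axis-parallel) rectangular regions in the plane. Assume $B$ shares an edge with $A$ and shares an edge with $C$, but $A$ and $C$ are disjoint except possibly in a single point. Let $S_A$, $S_B$, $S_C$ be finite sets of points in $A$, $B$ and $C$ respectively. Let $x_A$ and $x_C$ be the points of $S_B$ closest to $A$ and to $C$ respectively, and assume $x_A \neq x_C$. Let $P$ be a noncrossing Hamiltonian path through $S_B$ with endpoints $x_A$ and $x_C$. Let $P'$ be a path obtained from $P$ by adding an edge from $x_A$ to any point of $S_A$ and an edge from $x_C$ to any point of $S_C$. Then $P'$ is noncrossing.
   Context: Edges are straight line segments between points: for an edge $e=\{a,b\}$, $L(e)$ is the closed segment from $a$ to $b$. A path (set of edges) is noncrossing if no two of its edges have intersecting line segments (other than at a shared endpoint). The distance from a point $x$ to a set $R$ is $d(x,R)=\min_{y\in R} d(x,y)$ with $d$ the Euclidean distance; the point of $S_B$ closest to $A$ is the one minimizing $d(\cdot, A)$. *)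

theory Defs
  imports "HOL-Analysis.Analysis"
begin

type_synonym pt = "real \<times> real"

definition rectangle :: "pt set \<Rightarrow> bool" where
  "rectangle R \<longleftrightarrow> (\<exists>a1 b1 a2 b2. a1 < b1 \<and> a2 < b2 \<and> R = {a1..b1} \<times> {a2..b2})"

definition side_of :: "pt set \<Rightarrow> pt set \<Rightarrow> bool" where
  "side_of s R \<longleftrightarrow> (\<exists>a1 b1 a2 b2. a1 < b1 \<and> a2 < b2 \<and> R = {a1..b1} \<times> {a2..b2} \<and>
      (s = {a1} \<times> {a2..b2} \<or> s = {b1} \<times> {a2..b2} \<or>
       s = {a1..b1} \<times> {a2} \<or> s = {a1..b1} \<times> {b2}))"

definition shares_edge :: "pt set \<Rightarrow> pt set \<Rightarrow> bool" where
  "shares_edge R Q \<longleftrightarrow> interior R \<inter> interior Q = {} \<and> (\<exists>s. side_of s R \<and> side_of s Q)"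

definition L :: "pt set \<Rightarrow> pt set" where
  "L e = convex hull e"

definition noncrossing :: "pt set set \<Rightarrow> bool" where
  "noncrossing E \<longleftrightarrow> (\<forall>e\<in>E. \<forall>f\<in>E. e \<noteq> f \<longrightarrow> L e \<inter> L f \<subseteq> e \<inter> f)"

definition path_edges :: "pt list \<Rightarrow> pt set set" where
  "path_edges ps = {{ps ! i, ps ! Suc i} | i. Suc i < length ps}"

definition closest_point :: "pt \<Rightarrow> pt set \<Rightarrow> pt set \<Rightarrow> bool" where
  "closest_point x S R \<longleftrightarrow> x \<in> S \<and> (\<forall>y\<in>S. y \<noteq> x \<longrightarrow> infdist x R < infdist y R)"

end

theory Submission
  imports Defs
begin


datatype side = SL | SR | SD | SU

fun D :: "real \<Rightarrow> real \<Rightarrow> real \<Rightarrow> real \<Rightarrow> side \<Rightarrow> pt \<Rightarrow> real" where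
  "D b1 c1 b2 c2 SL p = fst p - b1"
| "D b1 c1 b2 c2 SR p = c1 - fst p"
| "D b1 c1 b2 c2 SD p = snd p - b2"
| "D b1 c1 b2 c2 SU p = c2 - snd p"

fun nbr :: "real \<Rightarrow> real \<Rightarrow> real \<Rightarrow> real \<Rightarrow> side \<Rightarrow> pt set \<Rightarrow> bool" where
  "nbr b1 c1 b2 c2 SL A = (\<exists>a<b1. A = {a..b1} \<times> {b2..c2})"
| "nbr b1 c1 b2 c2 SR A = (\<exists>a>c1. A = {c1..a} \<times> {b2..c2})"
| "nbr b1 c1 b2 c2 SD A = (\<exists>a<b2. A = {b1..c1} \<times> {a..b2})"
| "nbr b1 c1 b2 c2 SU A = (\<exists>a>c2. A = {b1..c1} \<times> {c2..a})"

fun opp :: "side \<Rightarrow> side" where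
  "opp SL = SR" | "opp SR = SL" | "opp SD = SU" | "opp SU = SD"

fun W :: "real \<Rightarrow> real \<Rightarrow> real \<Rightarrow> real \<Rightarrow> side \<Rightarrow> real" where
  "W b1 c1 b2 c2 SL = c1 - b1" | "W b1 c1 b2 c2 SR = c1 - b1"
| "W b1 c1 b2 c2 SD = c2 - b2" | "W b1 c1 b2 c2 SU = c2 - b2"

lemma D_aff: "D b1 c1 b2 c2 s ((1-u) *\<^sub>R a + u *\<^sub>R b) = (1-u) * D b1 c1 b2 c2 s a + u * D b1 c1 b2 c2 s b"
  by (cases s) (auto simp: algebra_simps)

lemma negD_aff: "- D b1 c1 b2 c2 s ((1-u) *\<^sub>R a + u *\<^sub>R b) = (1-u) * (- D b1 c1 b2 c2 s a) + u * (- D b1 c1 b2 c2 s b)"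
  using D_aff[of b1 c1 b2 c2 s u a b] by (simp add: algebra_simps)

lemma D_opp: "D b1 c1 b2 c2 s p + D b1 c1 b2 c2 (opp s) p = W b1 c1 b2 c2 s"
  by (cases s) auto

lemma D_nonneg: "p \<in> {b1..c1} \<times> {b2..c2} \<Longrightarrow> 0 \<le> D b1 c1 b2 c2 s p"
  by (cases s) auto

lemma W_pos: "b1 < c1 \<Longrightarrow> b2 < c2 \<Longrightarrow> 0 < W b1 c1 b2 c2 s"
  by (cases s) auto

lemma D_inj: "s \<noteq> t \<Longrightarrow> t \<noteq> opp s \<Longrightarrow> D b1 c1 b2 c2 s p = D b1 c1 b2 c2 s q \<Longrightarrow>
   D b1 c1 b2 c2 t p = D b1 c1 b2 c2 t q \<Longrightarrow> p = q"
  by (cases s; cases t) (auto simp: prod_eq_iff)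

lemma nbr_in: "nbr b1 c1 b2 c2 s A \<Longrightarrow> p \<in> A \<Longrightarrow>
   D b1 c1 b2 c2 s p \<le> 0 \<and> (\<forall>t. t \<noteq> s \<and> t \<noteq> opp s \<longrightarrow> 0 \<le> D b1 c1 b2 c2 t p)"
  apply (intro conjI allI impI)
   apply (cases s; auto)
  subgoal for t by (cases s; cases t; cases p; auto)
  done

lemma nbr_same: "b1 < c1 \<Longrightarrow> b2 < c2 \<Longrightarrow> nbr b1 c1 b2 c2 s A \<Longrightarrow> nbr b1 c1 b2 c2 s C \<Longrightarrow> A \<inter> C \<subseteq> {p} \<Longrightarrow> False"
proof (cases s)
  case SL
  assume "b1 < c1" "b2 < c2" "nbr b1 c1 b2 c2 s A" "nbr b1 c1 b2 c2 s C" "A \<inter> C \<subseteq> {p}"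
  then have "(b1,b2) \<in> A \<inter> C" "(b1,c2) \<in> A \<inter> C" using SL by auto
  then show False using \<open>A \<inter> C \<subseteq> {p}\<close> \<open>b2 < c2\<close> by auto
next
  case SR
  assume "b1 < c1" "b2 < c2" "nbr b1 c1 b2 c2 s A" "nbr b1 c1 b2 c2 s C" "A \<inter> C \<subseteq> {p}"
  then have "(c1,b2) \<in> A \<inter> C" "(c1,c2) \<in> A \<inter> C" using SR by auto
  then show False using \<open>A \<inter> C \<subseteq> {p}\<close> \<open>b2 < c2\<close> by auto
next
  case SD
  assume "b1 < c1" "b2 < c2" "nbr b1 c1 b2 c2 s A" "nbr b1 c1 b2 c2 s C" "A \<inter> C \<subseteq> {p}"
  then have "(b1,b2) \<in> A \<inter> C" "(c1,b2) \<in> A \<inter> C" using SD by auto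
  then show False using \<open>A \<inter> C \<subseteq> {p}\<close> \<open>b1 < c1\<close> by auto
next
  case SU
  assume "b1 < c1" "b2 < c2" "nbr b1 c1 b2 c2 s A" "nbr b1 c1 b2 c2 s C" "A \<inter> C \<subseteq> {p}"
  then have "(b1,c2) \<in> A \<inter> C" "(c1,c2) \<in> A \<inter> C" using SU by auto
  then show False using \<open>A \<inter> C \<subseteq> {p}\<close> \<open>b1 < c1\<close> by auto
qed

lemma infdist_eqI:
  fixes y :: pt
  assumes "a \<in> A" "dist y a = d" "\<And>b. b \<in> A \<Longrightarrow> d \<le> dist y b"
  shows "infdist y A = d"
proof (rule antisym)
  show "infdist y A \<le> d" using infdist_le[OF assms(1), of y] assms(2) by simp
  have "A \<noteq> {}" using assms(1) by auto
  then show "d \<le> infdist y A" unfolding infdist_notempty[OF \<open>A \<noteq> {}\<close>]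
    by (rule cINF_greatest) (use assms(3) in auto)
qed

lemma dist_fst_ge: "\<bar>fst (y::pt) - fst b\<bar> \<le> dist y b"
  using dist_fst_le[of y b] by (simp add: dist_real_def)
lemma dist_snd_ge: "\<bar>snd (y::pt) - snd b\<bar> \<le> dist y b"
  using dist_snd_le[of y b] by (simp add: dist_real_def)

lemma nbr_infdist:
  assumes "nbr b1 c1 b2 c2 s A" "y \<in> {b1..c1} \<times> {b2..c2}"
  shows "infdist y A = D b1 c1 b2 c2 s y"
proof (cases s)
  case SL
  then obtain a where a: "a < b1" "A = {a..b1} \<times> {b2..c2}" using assms by auto
  show ?thesis
  proof (rule infdist_eqI[of "(b1, snd y)"])
    show "(b1, snd y) \<in> A" using a assms(2) by auto
    show "dist y (b1, snd y) = D b1 c1 b2 c2 s y" using SL assms(2)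
      by (cases y) (auto simp: dist_Pair_Pair dist_real_def)
    fix b assume "b \<in> A" then show "D b1 c1 b2 c2 s y \<le> dist y b"
      using dist_fst_ge[of y b] SL a by auto
  qed
next
  case SR
  then obtain a where a: "c1 < a" "A = {c1..a} \<times> {b2..c2}" using assms by auto
  show ?thesis
  proof (rule infdist_eqI[of "(c1, snd y)"])
    show "(c1, snd y) \<in> A" using a assms(2) by auto
    show "dist y (c1, snd y) = D b1 c1 b2 c2 s y" using SR assms(2)
      by (cases y) (auto simp: dist_Pair_Pair dist_real_def)
    fix b assume "b \<in> A" then show "D b1 c1 b2 c2 s y \<le> dist y b"
      using dist_fst_ge[of y b] SR a by auto
  qed
next
  case SD
  then obtain a where a: "a < b2" "A = {b1..c1} \<times> {a..b2}" using assms by auto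
  show ?thesis
  proof (rule infdist_eqI[of "(fst y, b2)"])
    show "(fst y, b2) \<in> A" using a assms(2) by auto
    show "dist y (fst y, b2) = D b1 c1 b2 c2 s y" using SD assms(2)
      by (cases y) (auto simp: dist_Pair_Pair dist_real_def)
    fix b assume "b \<in> A" then show "D b1 c1 b2 c2 s y \<le> dist y b"
      using dist_snd_ge[of y b] SD a by auto
  qed
next
  case SU
  then obtain a where a: "c2 < a" "A = {b1..c1} \<times> {c2..a}" using assms by auto
  show ?thesis
  proof (rule infdist_eqI[of "(fst y, c2)"])
    show "(fst y, c2) \<in> A" using a assms(2) by auto
    show "dist y (fst y, c2) = D b1 c1 b2 c2 s y" using SU assms(2)
      by (cases y) (auto simp: dist_Pair_Pair dist_real_def)
    fix b assume "b \<in> A" then show "D b1 c1 b2 c2 s y \<le> dist y b"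
      using dist_snd_ge[of y b] SU a by auto
  qed
qed

lemma nbr_closest:
  assumes "nbr b1 c1 b2 c2 s A" "S \<subseteq> {b1..c1} \<times> {b2..c2}" "closest_point x S A"
  shows "\<forall>y\<in>S. y \<noteq> x \<longrightarrow> D b1 c1 b2 c2 s x < D b1 c1 b2 c2 s y"
proof (intro ballI impI)
  fix y assume y: "y \<in> S" "y \<noteq> x"
  have x: "x \<in> S" using assms(3) unfolding closest_point_def by auto
  have "infdist x A < infdist y A" using assms(3) y unfolding closest_point_def by auto
  then show "D b1 c1 b2 c2 s x < D b1 c1 b2 c2 s y"
    using nbr_infdist[OF assms(1)] x y assms(2) by (metis subsetD)
qed


lemma box_eq:
  fixes a1 b1 a2 b2 c1 d1 c2 d2 :: real
  assumes "a1 < b1" "a2 < b2"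
  shows "({a1..b1} \<times> {a2..b2} = {c1..d1} \<times> {c2..d2}) \<longleftrightarrow> (a1 = c1 \<and> b1 = d1 \<and> a2 = c2 \<and> b2 = d2)"
  using assms by (auto simp: times_eq_iff)

lemma side_of_box:
  fixes a1 b1 a2 b2 :: real
  assumes "a1 < b1" "a2 < b2" "R = {a1..b1} \<times> {a2..b2}"
  shows "side_of s R \<longleftrightarrow> (s = {a1} \<times> {a2..b2} \<or> s = {b1} \<times> {a2..b2} \<or>
       s = {a1..b1} \<times> {a2} \<or> s = {a1..b1} \<times> {b2})"
proof
  assume "side_of s R"
  then obtain c1 d1 c2 d2 where c: "c1 < d1" "c2 < d2" "R = {c1..d1} \<times> {c2..d2}"
    "s = {c1} \<times> {c2..d2} \<or> s = {d1} \<times> {c2..d2} \<or> s = {c1..d1} \<times> {c2} \<or> s = {c1..d1} \<times> {d2}"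
    unfolding side_of_def by blast
  have "a1 = c1 \<and> b1 = d1 \<and> a2 = c2 \<and> b2 = d2" using box_eq[OF assms(1,2), of c1 d1 c2 d2] assms(3) c(3) by simp
  then show "s = {a1} \<times> {a2..b2} \<or> s = {b1} \<times> {a2..b2} \<or> s = {a1..b1} \<times> {a2} \<or> s = {a1..b1} \<times> {b2}"
    using c(4) by simp
next
  assume "s = {a1} \<times> {a2..b2} \<or> s = {b1} \<times> {a2..b2} \<or> s = {a1..b1} \<times> {a2} \<or> s = {a1..b1} \<times> {b2}"
  then show "side_of s R" unfolding side_of_def using assms by blast
qed

lemma shares_nbr:
  fixes b1 c1 b2 c2 :: real
  assumes "b1 < c1" "b2 < c2" "B = {b1..c1} \<times> {b2..c2}" "rectangle A" "shares_edge B A"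
  shows "\<exists>s. nbr b1 c1 b2 c2 s A"
proof -
  obtain p1 q1 p2 q2 where A: "p1 < q1" "p2 < q2" "A = {p1..q1} \<times> {p2..q2}"
    using assms(4) unfolding rectangle_def by auto
  obtain s where s: "side_of s B" "side_of s A" and int: "interior B \<inter> interior A = {}"
    using assms(5) unfolding shares_edge_def by auto
  have intB: "interior B = {b1<..<c1} \<times> {b2<..<c2}" using assms(3) by (simp add: interior_Times)
  have intA: "interior A = {p1<..<q1} \<times> {p2<..<q2}" using A(3) by (simp add: interior_Times)
  note sB = s(1)[unfolded side_of_box[OF assms(1,2,3)]]
  note sA = s(2)[unfolded side_of_box[OF A]]
  have ni: False if "max b1 p1 < min c1 q1" "max b2 p2 < min c2 q2"
  proof -
    have "((max b1 p1 + min c1 q1)/2, (max b2 p2 + min c2 q2)/2) \<in> interior B \<inter> interior A"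
      unfolding intA intB using that by auto
    then show False using int by auto
  qed
  have n: "\<not> nbr b1 c1 b2 c2 t A" if "\<not> ?thesis" for t using that by auto
  show ?thesis
  proof (rule ccontr)
    assume "\<not> ?thesis"
    note n1 = n[OF this, of SL] n[OF this, of SR] n[OF this, of SD] n[OF this, of SU]
    from sB sA show False
      apply (elim disjE)
      using n1 ni assms(1,2) A by (simp_all add: times_eq_iff)
  qed
qed


lemma L_pair: "z \<in> L {a, b} \<longleftrightarrow> (\<exists>u. 0 \<le> u \<and> u \<le> 1 \<and> z = (1-u) *\<^sub>R a + u *\<^sub>R b)"
  unfolding L_def segment_convex_hull[symmetric] in_segment by auto

lemma path_sep:
  fixes f :: "pt \<Rightarrow> real"
  assumes aff: "\<And>a b u. f ((1-u) *\<^sub>R a + u *\<^sub>R b) = (1-u) * f a + u * f b"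
    and mx: "\<forall>y\<in>S. y \<noteq> x \<longrightarrow> f y < f x" and "f x \<le> f s" "p \<in> S" "q \<in> S"
  shows "L {x, s} \<inter> L {p, q} \<subseteq> {x, s} \<inter> {p, q}"
proof
  fix z assume "z \<in> L {x, s} \<inter> L {p, q}"
  then obtain u t where u: "0 \<le> u" "u \<le> 1" "z = (1-u) *\<^sub>R x + u *\<^sub>R s"
    and t: "0 \<le> t" "t \<le> 1" "z = (1-t) *\<^sub>R p + t *\<^sub>R q" using L_pair[of z x s] L_pair[of z p q] by blast
  have fz1: "f z = (1-u) * f x + u * f s" using aff u(3) by simp
  have fz2: "f z = (1-t) * f p + t * f q" using aff t(3) by simp
  have ge: "f x \<le> f z"
  proof -
    have "0 \<le> u * (f s - f x)" using u assms(3) by simp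
    then show ?thesis using fz1 by (simp add: algebra_simps)
  qed
  consider "p = x" "q = x" | "p = x" "q \<noteq> x" | "p \<noteq> x" "q = x" | "p \<noteq> x" "q \<noteq> x" by blast
  then show "z \<in> {x, s} \<inter> {p, q}"
  proof cases
    case 1 then have "z = x" using t(3) by (simp add: algebra_simps)
    then show ?thesis using 1 by simp
  next
    case 2
    then have "f q < f x" using mx assms(5) by auto
    have "t * (f q - f x) \<ge> 0" using ge fz2 2 by (simp add: algebra_simps)
    then have "t = 0" using \<open>f q < f x\<close> t(1) by (smt (verit) mult_pos_neg)
    then have "z = x" using t(3) 2 by simp
    then show ?thesis using 2 by simp
  next
    case 3
    then have "f p < f x" using mx assms(4) by auto
    have "(1-t) * (f p - f x) \<ge> 0" using ge fz2 3 by (simp add: algebra_simps)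
    then have "t = 1" using \<open>f p < f x\<close> t(2) by (smt (verit) mult_pos_neg)
    then have "z = x" using t(3) 3 by simp
    then show ?thesis using 3 by simp
  next
    case 4
    then have "f p < f x" "f q < f x" using mx assms(4,5) by auto
    have "(1-t) * f p \<le> (1-t) * f x" "t * f q \<le> t * f x"
      using t \<open>f p < f x\<close> \<open>f q < f x\<close> by (simp_all add: mult_left_mono)
    moreover have "(1-t) * f p < (1-t) * f x \<or> t * f q < t * f x"
      using t \<open>f p < f x\<close> \<open>f q < f x\<close> by (cases "t = 1") auto
    ultimately have "f z < f x" using fz2 by (auto simp: algebra_simps)
    then show ?thesis using ge by simp
  qed
qed

lemma sep:
  fixes f :: "pt \<Rightarrow> real"
  assumes aff: "\<And>a b u. f ((1-u) *\<^sub>R a + u *\<^sub>R b) = (1-u) * f a + u * f b"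
    and "c < f xA" "c \<le> f sA" "f xC < c" "f sC \<le> c" "f sA = c \<Longrightarrow> f sC = c \<Longrightarrow> sA = sC"
  shows "L {xA, sA} \<inter> L {xC, sC} \<subseteq> {xA, sA} \<inter> {xC, sC}"
proof
  fix z assume "z \<in> L {xA, sA} \<inter> L {xC, sC}"
  then obtain u t where u: "0 \<le> u" "u \<le> 1" "z = (1-u) *\<^sub>R xA + u *\<^sub>R sA"
    and t: "0 \<le> t" "t \<le> 1" "z = (1-t) *\<^sub>R xC + t *\<^sub>R sC" using L_pair[of z xA sA] L_pair[of z xC sC] by blast
  have fz1: "f z = (1-u) * f xA + u * f sA" using aff u(3) by simp
  have fz2: "f z = (1-t) * f xC + t * f sC" using aff t(3) by simp
  have a1: "0 \<le> (1-u) * (f xA - c)" "0 \<le> u * (f sA - c)" using u assms by simp_all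
  have a2: "0 \<le> (1-t) * (c - f xC)" "0 \<le> t * (c - f sC)" using t assms by simp_all
  have "f z - c = (1-u) * (f xA - c) + u * (f sA - c)" using fz1 by (simp add: algebra_simps)
  moreover have "c - f z = (1-t) * (c - f xC) + t * (c - f sC)" using fz2 by (simp add: algebra_simps)
  ultimately have e: "(1-u) * (f xA - c) = 0" "u * (f sA - c) = 0" "(1-t) * (c - f xC) = 0" "t * (c - f sC) = 0"
    using a1 a2 by linarith+
  have "u = 1" using e(1) assms(2) by simp
  have "t = 1" using e(3) assms(4) by simp
  have "f sA = c" using e(2) \<open>u = 1\<close> by simp
  have "f sC = c" using e(4) \<open>t = 1\<close> by simp
  have "z = sA" "z = sC" using u(3) t(3) \<open>u = 1\<close> \<open>t = 1\<close> by simp_all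
  then show "z \<in> {xA, sA} \<inter> {xC, sC}" by simp
qed

lemma adj:
  fixes X Y :: "pt \<Rightarrow> real"
  assumes affX: "\<And>a b u. X ((1-u) *\<^sub>R a + u *\<^sub>R b) = (1-u) * X a + u * X b"
    and affY: "\<And>a b u. Y ((1-u) *\<^sub>R a + u *\<^sub>R b) = (1-u) * Y a + u * Y b"
    and inj: "X sA = X sC \<Longrightarrow> Y sA = Y sC \<Longrightarrow> sA = sC"
    and h: "0 \<le> X xA" "0 \<le> Y xC" "X xA < X xC" "Y xC < Y xA"
      "X sA \<le> 0" "0 \<le> Y sA" "Y sC \<le> 0" "0 \<le> X sC"
  shows "L {xA, sA} \<inter> L {xC, sC} \<subseteq> {xA, sA} \<inter> {xC, sC}"
proof -
  define a where "a = X xA + X xC"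
  define b where "b = Y xA + Y xC"
  have a: "0 < a" and b: "0 < b" using h unfolding a_def b_def by linarith+
  define f where "f p = a * Y p - b * X p" for p
  show ?thesis
  proof (rule sep[of f 0])
    show "f ((1-u) *\<^sub>R p + u *\<^sub>R q) = (1-u) * f p + u * f q" for p q u
      unfolding f_def affX affY by (simp add: algebra_simps)
    have "f xA = X xC * Y xA - Y xC * X xA" unfolding f_def a_def b_def by (simp add: algebra_simps)
    moreover have "X xA * Y xC \<le> X xA * Y xA" using h by (simp add: mult_left_mono)
    moreover have "X xA * Y xA < X xC * Y xA" using h by (simp add: mult_strict_right_mono)
    ultimately show "0 < f xA" by (simp add: algebra_simps)
    have "f xC = X xA * Y xC - Y xA * X xC" unfolding f_def a_def b_def by (simp add: algebra_simps)
    moreover have "X xA * Y xC < X xC * Y xC \<or> Y xC = 0" using h by (auto simp: mult_strict_right_mono)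
    moreover have "X xC * Y xC \<le> Y xA * X xC" using h by (simp add: mult_left_mono mult.commute)
    moreover have "Y xC = 0 \<Longrightarrow> 0 < Y xA * X xC" using h by simp
    ultimately show "f xC < 0" by (auto simp: algebra_simps)
    show "0 \<le> f sA" unfolding f_def using a b h by (smt (verit) mult_nonneg_nonneg mult_nonneg_nonpos)
    show "f sC \<le> 0" unfolding f_def using a b h by (smt (verit) mult_nonneg_nonneg mult_nonneg_nonpos)
    assume "f sA = 0" "f sC = 0"
    then have "X sA = 0" "Y sA = 0" "X sC = 0" "Y sC = 0" unfolding f_def using a b h
      by (smt (verit) mult_nonneg_nonneg mult_nonneg_nonpos mult_pos_pos mult_pos_neg)+
    then show "sA = sC" using inj by simp
  qed
qed

theorem lemma3:
  fixes A B C :: "pt set" and SA SB SC :: "pt set" and xA xC sA sC :: pt and ps :: "pt list"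
  assumes "rectangle A" and "rectangle B" and "rectangle C"
    and "A \<noteq> B" and "B \<noteq> C" and "A \<noteq> C"
    and "shares_edge B A" and "shares_edge B C"
    and "\<exists>p. A \<inter> C \<subseteq> {p}"
    and "finite SA" and "finite SB" and "finite SC"
    and "SA \<subseteq> A" and "SB \<subseteq> B" and "SC \<subseteq> C"
    and "closest_point xA SB A" and "closest_point xC SB C"
    and "xA \<noteq> xC"
    and "distinct ps" and "set ps = SB" and "hd ps = xA" and "last ps = xC"
    and "noncrossing (path_edges ps)"
    and "sA \<in> SA" and "sC \<in> SC"
  shows "noncrossing (path_edges ps \<union> {{xA, sA}, {xC, sC}})"
proof -
  note a = assms
  obtain b1 c1 b2 c2 where B: "b1 < c1" "b2 < c2" "B = {b1..c1} \<times> {b2..c2}"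
    using a(2) unfolding rectangle_def by auto
  obtain sa where sa: "nbr b1 c1 b2 c2 sa A" using shares_nbr[OF B a(1,7)] by auto
  obtain sc where sc: "nbr b1 c1 b2 c2 sc C" using shares_nbr[OF B a(3,8)] by auto
  have "sa \<noteq> sc" using nbr_same[OF B(1,2) sa] sc a(9) by auto
  have SB: "SB \<subseteq> {b1..c1} \<times> {b2..c2}" using a(14) B(3) by simp
  have xA: "xA \<in> SB" and xC: "xC \<in> SB" using a(16,17) unfolding closest_point_def by auto
  have sA: "sA \<in> A" and sC: "sC \<in> C" using a(13,15,24,25) by auto
  let ?D = "D b1 c1 b2 c2"
  have mA: "\<forall>y\<in>SB. y \<noteq> xA \<longrightarrow> ?D sa xA < ?D sa y" using nbr_closest[OF sa SB a(16)] .
  have mC: "\<forall>y\<in>SB. y \<noteq> xC \<longrightarrow> ?D sc xC < ?D sc y" using nbr_closest[OF sc SB a(17)] .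
  have xA0: "0 \<le> ?D t xA" and xC0: "0 \<le> ?D t xC" for t using D_nonneg xA xC SB by blast+
  have sAi: "?D sa sA \<le> 0 \<and> (\<forall>t. t \<noteq> sa \<and> t \<noteq> opp sa \<longrightarrow> 0 \<le> ?D t sA)"
    using nbr_in[OF sa sA] .
  have sCi: "?D sc sC \<le> 0 \<and> (\<forall>t. t \<noteq> sc \<and> t \<noteq> opp sc \<longrightarrow> 0 \<le> ?D t sC)"
    using nbr_in[OF sc sC] .
  have edge: "\<exists>p q. f = {p, q} \<and> p \<in> SB \<and> q \<in> SB" if fe: "f \<in> path_edges ps" for f
  proof -
    obtain i where i: "Suc i < length ps" "f = {ps ! i, ps ! Suc i}"
      using fe unfolding path_edges_def by blast
    moreover have "ps ! i \<in> SB" "ps ! Suc i \<in> SB" using a(20) i(1) by auto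
    ultimately show ?thesis by blast
  qed
  have PA: "L {xA, sA} \<inter> L f \<subseteq> {xA, sA} \<inter> f" if fe: "f \<in> path_edges ps" for f
  proof -
    obtain p q where f: "f = {p, q}" "p \<in> SB" "q \<in> SB" using edge[OF fe] by auto
    have "L {xA, sA} \<inter> L {p, q} \<subseteq> {xA, sA} \<inter> {p, q}"
    proof (rule path_sep[of "\<lambda>p. - ?D sa p" SB])
      show "\<forall>y\<in>SB. y \<noteq> xA \<longrightarrow> - ?D sa y < - ?D sa xA" using mA by auto
      show "- ?D sa xA \<le> - ?D sa sA" using sAi xA0[of sa] by linarith
    qed (use negD_aff f in auto)
    then show ?thesis using f by simp
  qed
  have PC: "L {xC, sC} \<inter> L f \<subseteq> {xC, sC} \<inter> f" if fe: "f \<in> path_edges ps" for f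
  proof -
    obtain p q where f: "f = {p, q}" "p \<in> SB" "q \<in> SB" using edge[OF fe] by auto
    have "L {xC, sC} \<inter> L {p, q} \<subseteq> {xC, sC} \<inter> {p, q}"
    proof (rule path_sep[of "\<lambda>p. - ?D sc p" SB])
      show "\<forall>y\<in>SB. y \<noteq> xC \<longrightarrow> - ?D sc y < - ?D sc xC" using mC by auto
      show "- ?D sc xC \<le> - ?D sc sC" using sCi xC0[of sc] by linarith
    qed (use negD_aff f in auto)
    then show ?thesis using f by simp
  qed
  have AC: "L {xA, sA} \<inter> L {xC, sC} \<subseteq> {xA, sA} \<inter> {xC, sC}"
  proof (cases "sc = opp sa")
    case True
    have lt: "?D sa xA < ?D sa xC" using mA xC a(18) by auto
    have "?D sa sC + ?D sc sC = W b1 c1 b2 c2 sa" "?D sa xC + ?D sc xC = W b1 c1 b2 c2 sa"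
      using D_opp True by blast+
    then have ge: "?D sa xC \<le> ?D sa sC" using sCi xC0[of sc] by linarith
    show ?thesis
      by (rule sep[of "\<lambda>p. - ?D sa p" "- (?D sa xA + ?D sa xC) / 2"])
        (use negD_aff lt ge sAi xA0[of sa] in auto)
  next
    case False
    have ns: "sa \<noteq> opp sc" using False by (cases sa; cases sc) auto
    show ?thesis
    proof (rule adj[of "?D sa" "?D sc"])
      show "?D sa ((1 - u) *\<^sub>R p + u *\<^sub>R q) = (1 - u) * ?D sa p + u * ?D sa q" for u p q
        by (rule D_aff)
      show "?D sc ((1 - u) *\<^sub>R p + u *\<^sub>R q) = (1 - u) * ?D sc p + u * ?D sc q" for u p q
        by (rule D_aff)
      show "?D sa sA = ?D sa sC \<Longrightarrow> ?D sc sA = ?D sc sC \<Longrightarrow> sA = sC"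
        using D_inj[OF \<open>sa \<noteq> sc\<close> False] by blast
      show "0 \<le> ?D sa xA" "0 \<le> ?D sc xC" using xA0 xC0 by auto
      show "?D sa xA < ?D sa xC" using mA xC a(18) by auto
      show "?D sc xC < ?D sc xA" using mC xA a(18) by auto
      show "?D sa sA \<le> 0" "0 \<le> ?D sc sA" using sAi False \<open>sa \<noteq> sc\<close> by auto
      show "?D sc sC \<le> 0" "0 \<le> ?D sa sC" using sCi ns \<open>sa \<noteq> sc\<close> by auto
    qed
  qed
  show ?thesis
    unfolding noncrossing_def
  proof (intro ballI impI)
    fix e f assume e: "e \<in> path_edges ps \<union> {{xA, sA}, {xC, sC}}" and f: "f \<in> path_edges ps \<union> {{xA, sA}, {xC, sC}}"
      and "e \<noteq> f"
    show "L e \<inter> L f \<subseteq> e \<inter> f"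
    proof -
      have sym: "L e \<inter> L f \<subseteq> e \<inter> f" if "L f \<inter> L e \<subseteq> f \<inter> e" using that by blast
      have E: "L e \<inter> L f \<subseteq> e \<inter> f" if "e \<in> path_edges ps" "f \<in> path_edges ps"
        using a(23) that \<open>e \<noteq> f\<close> unfolding noncrossing_def by blast
      from e f show ?thesis
      proof (elim UnE insertE)
      qed (use E PA PC AC sym \<open>e \<noteq> f\<close> in \<open>simp_all\<close>)
    qed
  qed
qed

end
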